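(* Let $1\le \nu<\infty$ and let $w,\phi$ be entire functions. The weighted composition operator $W_{w,\phi}f=w\cdot(f\circ\phi)$ is an invertible bounded operator on $\mathcal{F}^\nu$ if and only if $\phi(z)=az+b$ with $|a|=1$, $b\in\mathbb{C}$, and $w(z)=w(0)e^{-\overline{b}az}$ for all $z\in\mathbb{C}$, with $w(0)\neq 0$.
   Context: For $1\le\nu<\infty$, the Fock space $\mathcal{F}^\nu$ is the space of entire functions $f:\mathbb{C}\to\mathbb{C}$ with $\|f\|_\nu:=\left(\frac{\nu}{2\pi}\int_{\mathbb{C}}|f(z)|^\nu e^{-\nu|z|^2/2}\,dm(z)\right)^{1/\nu}<\infty$, where $m$ is Lebesgue area measure. For entire $w,\phi$, the weighted composition operator is $W_{w,\phi}f=w\,(f\circ\phi)$. *)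

theory Defs
  imports "HOL-Complex_Analysis.Complex_Analysis"
begin

definition fock_integral :: "real \<Rightarrow> (complex \<Rightarrow> complex) \<Rightarrow> ennreal" where
  "fock_integral \<nu> f =
     (\<integral>\<^sup>+ z. ennreal (norm (f z) powr \<nu> * exp (- \<nu> * (norm z)\<^sup>2 / 2)) \<partial>lborel)"

definition fock_space :: "real \<Rightarrow> (complex \<Rightarrow> complex) set" where
  "fock_space \<nu> = {f. f holomorphic_on UNIV \<and> fock_integral \<nu> f < \<infinity>}"

definition fock_norm :: "real \<Rightarrow> (complex \<Rightarrow> complex) \<Rightarrow> real" where
  "fock_norm \<nu> f = ((\<nu> / (2 * pi)) * enn2real (fock_integral \<nu> f)) powr (1 / \<nu>)"

definition wcomp :: "(complex \<Rightarrow> complex) \<Rightarrow> (complex \<Rightarrow> complex)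
                      \<Rightarrow> (complex \<Rightarrow> complex) \<Rightarrow> (complex \<Rightarrow> complex)" where
  "wcomp w \<phi> f = (\<lambda>z. w z * f (\<phi> z))"

definition fock_bounded_op ::
  "real \<Rightarrow> ((complex \<Rightarrow> complex) \<Rightarrow> (complex \<Rightarrow> complex)) \<Rightarrow> bool" where
  "fock_bounded_op \<nu> T \<longleftrightarrow>
     (\<forall>f\<in>fock_space \<nu>. T f \<in> fock_space \<nu>) \<and>
     (\<forall>f\<in>fock_space \<nu>. \<forall>g\<in>fock_space \<nu>. T (\<lambda>z. f z + g z) = (\<lambda>z. T f z + T g z)) \<and>
     (\<forall>c. \<forall>f\<in>fock_space \<nu>. T (\<lambda>z. c * f z) = (\<lambda>z. c * T f z)) \<and>
     (\<exists>C. \<forall>f\<in>fock_space \<nu>. fock_norm \<nu> (T f) \<le> C * fock_norm \<nu> f)"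

definition fock_invertible_op ::
  "real \<Rightarrow> ((complex \<Rightarrow> complex) \<Rightarrow> (complex \<Rightarrow> complex)) \<Rightarrow> bool" where
  "fock_invertible_op \<nu> T \<longleftrightarrow>
     fock_bounded_op \<nu> T \<and>
     (\<exists>S. fock_bounded_op \<nu> S \<and>
          (\<forall>f\<in>fock_space \<nu>. S (T f) = f \<and> T (S f) = f))"

end

theory Submission
  imports Defs "HOL-Probability.Probability" "HOL-Real_Asymp.Real_Asymp"
begin

lemma circle_coeff:
  fixes g :: "complex \<Rightarrow> complex" and r :: real
  assumes g: "g holomorphic_on UNIV" and r: "r > 0"
  shows "((\<lambda>t. g (of_real r * exp (2 * of_real pi * \<i> * of_real t)) / (of_real r * exp (2 * of_real pi * \<i> * of_real t)) ^ k)
          has_integral ((deriv ^^ k) g 0 / fact k)) {0..1}"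
proof -
  have "((\<lambda>u. g u / (u - 0) ^ (Suc k)) has_contour_integral ((2 * pi * \<i>) / (fact k) * (deriv ^^ k) g 0))
           (circlepath 0 r)"
    by (rule Cauchy_has_contour_integral_higher_derivative_circlepath)
       (use g r in \<open>auto intro: holomorphic_on_subset holomorphic_on_imp_continuous_on\<close>)
  then have "((\<lambda>x. g (circlepath 0 r x) / (circlepath 0 r x) ^ Suc k * vector_derivative (circlepath 0 r) (at x within {0..1}))
      has_integral ((2 * pi * \<i>) / (fact k) * (deriv ^^ k) g 0)) {0..1}"
    by (simp add: has_contour_integral_def)
  then have "((\<lambda>x. (2 * pi * \<i>) * (g (of_real r * exp (2 * of_real pi * \<i> * of_real x)) / (of_real r * exp (2 * of_real pi * \<i> * of_real x)) ^ k))
      has_integral ((2 * pi * \<i>) / (fact k) * (deriv ^^ k) g 0)) {0..1}"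
    apply (rule has_integral_eq[rotated])
    using r apply (simp add: vector_derivative_circlepath01)
    apply (simp add: circlepath)
    done
  then have "((\<lambda>x. (2 * pi * \<i>) * (g (of_real r * exp (2 * of_real pi * \<i> * of_real x)) / (of_real r * exp (2 * of_real pi * \<i> * of_real x)) ^ k)
     * (1 / (2 * pi * \<i>))) has_integral ((2 * pi * \<i>) / (fact k) * (deriv ^^ k) g 0) * (1 / (2 * pi * \<i>))) {0..1}"
    by (rule has_integral_mult_left)
  then show ?thesis by simp
qed

lemma measurable_Complex_pair[measurable]:
  "(\<lambda>p::real\<times>real. Complex (fst p) (snd p)) \<in> borel_measurable (lborel \<Otimes>\<^sub>M lborel)"
proof -
  have "continuous_on UNIV (\<lambda>p::real\<times>real. Complex (fst p) (snd p))"
    by (intro continuous_intros)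
  then have "(\<lambda>p::real\<times>real. Complex (fst p) (snd p)) \<in> borel_measurable borel"
    by (rule borel_measurable_continuous_onI)
  moreover have "sets (lborel \<Otimes>\<^sub>M lborel) = sets (borel :: (real \<times> real) measure)"
    by (metis borel_prod sets_lborel sets_pair_measure_cong)
  ultimately show ?thesis
    using measurable_cong_sets by blast
qed

lemma lborel_complex:
  "distr (lborel \<Otimes>\<^sub>M lborel) borel (\<lambda>p. Complex (fst p) (snd p)) = (lborel :: complex measure)"
proof (rule lborel_eqI[symmetric])
  fix l u :: complex
  assume lu: "\<And>b. b \<in> Basis \<Longrightarrow> l \<bullet> b \<le> u \<bullet> b"
  have "(\<lambda>p. Complex (fst p) (snd p)) -` box l u \<inter> space (lborel \<Otimes>\<^sub>M lborel)
      = {Re l<..<Re u} \<times> {Im l<..<Im u}"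
    by (auto simp: box_def Basis_complex_def space_pair_measure)
  moreover have "Re l \<le> Re u" "Im l \<le> Im u" using lu[of 1] lu[of \<i>]
    by (auto simp: Basis_complex_def)
  ultimately show "emeasure (distr (lborel \<Otimes>\<^sub>M lborel) borel (\<lambda>p. Complex (fst p) (snd p))) (box l u) =
         ennreal (\<Prod>b\<in>Basis. (u - l) \<bullet> b)"
    by (simp add: emeasure_distr lborel.emeasure_pair_measure_Times Basis_complex_def ennreal_mult)
qed simp

lemma nn_integral_complex_iter:
  assumes [measurable]: "H \<in> borel_measurable (borel :: complex measure)"
  shows "(\<integral>\<^sup>+z. H z \<partial>lborel) = (\<integral>\<^sup>+x. (\<integral>\<^sup>+y. H (Complex x y) \<partial>lborel) \<partial>lborel)"
proof -
  have "(\<integral>\<^sup>+z. H z \<partial>lborel) = (\<integral>\<^sup>+z. H z \<partial>(distr (lborel \<Otimes>\<^sub>M lborel) borel (\<lambda>p. Complex (fst p) (snd p))))"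
    by (simp add: lborel_complex)
  also have "\<dots> = (\<integral>\<^sup>+p. H (Complex (fst p) (snd p)) \<partial>(lborel \<Otimes>\<^sub>M lborel))"
    by (rule nn_integral_distr) auto
  also have "\<dots> = (\<integral>\<^sup>+x. (\<integral>\<^sup>+y. H (Complex x y) \<partial>lborel) \<partial>lborel)"
    using lborel.nn_integral_fst[of "\<lambda>p. H (Complex (fst p) (snd p))"] by simp
  finally show ?thesis .
qed

lemma cont_pair_measurable:
  fixes g :: "real \<times> real \<Rightarrow> complex"
  assumes "continuous_on UNIV g"
  shows "g \<in> borel_measurable (lborel \<Otimes>\<^sub>M lborel)"
proof -
  have "g \<in> borel_measurable borel"
    using assms by (rule borel_measurable_continuous_onI)
  moreover have "sets (lborel \<Otimes>\<^sub>M lborel) = sets (borel :: (real \<times> real) measure)"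
    by (metis borel_prod sets_lborel sets_pair_measure_cong)
  ultimately show ?thesis
    using measurable_cong_sets by blast
qed

lemma comp_cont_measurable:
  fixes S :: "complex \<Rightarrow> complex"
  assumes "H \<in> borel_measurable (borel :: complex measure)" "continuous_on UNIV S"
  shows "(\<lambda>z. H (S z)) \<in> borel_measurable borel"
  using measurable_compose[OF borel_measurable_continuous_onI[OF assms(2)] assms(1)] by (simp add: o_def)

lemma shear_x:
  assumes Hm: "H \<in> borel_measurable (borel :: complex measure)"
  shows "(\<integral>\<^sup>+z. H (Complex (Re z + c * Im z) (Im z)) \<partial>lborel) = (\<integral>\<^sup>+z. H z \<partial>lborel)"
proof -
  have m1: "(\<lambda>z. H (Complex (Re z + c * Im z) (Im z))) \<in> borel_measurable borel"
    by (rule comp_cont_measurable[OF Hm]) (intro continuous_intros)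
  have m2: "(\<lambda>p. H (Complex (fst p + c * snd p) (snd p))) \<in> borel_measurable (lborel \<Otimes>\<^sub>M lborel)"
    by (rule measurable_compose[OF cont_pair_measurable Hm]) (intro continuous_intros)
  have m3: "(\<lambda>p. H (Complex (fst p) (snd p))) \<in> borel_measurable (lborel \<Otimes>\<^sub>M lborel)"
    by (rule measurable_compose[OF cont_pair_measurable Hm]) (intro continuous_intros)
  have "(\<integral>\<^sup>+z. H (Complex (Re z + c * Im z) (Im z)) \<partial>lborel)
      = (\<integral>\<^sup>+x. (\<integral>\<^sup>+y. H (Complex (x + c * y) y) \<partial>lborel) \<partial>lborel)"
    using nn_integral_complex_iter[OF m1] by simp
  also have "\<dots> = (\<integral>\<^sup>+y. (\<integral>\<^sup>+x. H (Complex (x + c * y) y) \<partial>lborel) \<partial>lborel)"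
    using lborel_pair.Fubini'[of "\<lambda>x y. H (Complex (x + c * y) y)"] m2 by (simp add: case_prod_beta')
  also have "\<dots> = (\<integral>\<^sup>+y. (\<integral>\<^sup>+x. H (Complex x y) \<partial>lborel) \<partial>lborel)"
  proof (rule nn_integral_cong)
    fix y :: real
    have mm: "(\<lambda>x. H (Complex x y)) \<in> borel_measurable borel"
      by (rule measurable_compose[OF borel_measurable_continuous_onI Hm]) (intro continuous_intros)
    show "(\<integral>\<^sup>+x. H (Complex (x + c * y) y) \<partial>lborel) = (\<integral>\<^sup>+x. H (Complex x y) \<partial>lborel)"
      using nn_integral_real_affine[OF mm, of 1 "c * y"] by (simp add: add.commute)
  qed
  also have "\<dots> = (\<integral>\<^sup>+x. (\<integral>\<^sup>+y. H (Complex x y) \<partial>lborel) \<partial>lborel)"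
    using lborel_pair.Fubini'[of "\<lambda>x y. H (Complex x y)"] m3 by (simp add: case_prod_beta')
  also have "\<dots> = (\<integral>\<^sup>+z. H z \<partial>lborel)"
    using nn_integral_complex_iter[OF Hm] by simp
  finally show ?thesis .
qed

lemma shear_y:
  assumes Hm: "H \<in> borel_measurable (borel :: complex measure)"
  shows "(\<integral>\<^sup>+z. H (Complex (Re z) (Im z + c * Re z)) \<partial>lborel) = (\<integral>\<^sup>+z. H z \<partial>lborel)"
proof -
  have m1: "(\<lambda>z. H (Complex (Re z) (Im z + c * Re z))) \<in> borel_measurable borel"
    by (rule comp_cont_measurable[OF Hm]) (intro continuous_intros)
  have "(\<integral>\<^sup>+z. H (Complex (Re z) (Im z + c * Re z)) \<partial>lborel)
      = (\<integral>\<^sup>+x. (\<integral>\<^sup>+y. H (Complex x (y + c * x)) \<partial>lborel) \<partial>lborel)"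
    using nn_integral_complex_iter[OF m1] by simp
  also have "\<dots> = (\<integral>\<^sup>+x. (\<integral>\<^sup>+y. H (Complex x y) \<partial>lborel) \<partial>lborel)"
  proof (rule nn_integral_cong)
    fix x :: real
    have mm: "(\<lambda>y. H (Complex x y)) \<in> borel_measurable borel"
      by (rule measurable_compose[OF borel_measurable_continuous_onI Hm]) (intro continuous_intros)
    show "(\<integral>\<^sup>+y. H (Complex x (y + c * x)) \<partial>lborel) = (\<integral>\<^sup>+y. H (Complex x y) \<partial>lborel)"
      using nn_integral_real_affine[OF mm, of 1 "c * x"] by (simp add: add.commute)
  qed
  also have "\<dots> = (\<integral>\<^sup>+z. H z \<partial>lborel)"
    using nn_integral_complex_iter[OF Hm] by simp
  finally show ?thesis .
qed

lemma rot_decomp: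
  fixes a z :: complex
  assumes "norm a = 1" "Re a \<noteq> -1"
  defines "\<alpha> \<equiv> - Im a / (1 + Re a)"
  shows "a * z = (\<lambda>z. Complex (Re z + \<alpha> * Im z) (Im z))
                  ((\<lambda>z. Complex (Re z) (Im z + Im a * Re z))
                  ((\<lambda>z. Complex (Re z + \<alpha> * Im z) (Im z)) z))"
proof -
  have n: "Re a ^ 2 + Im a ^ 2 = 1" using assms(1) by (simp add: cmod_def)
  have d: "1 + Re a \<noteq> 0" using assms(2) by linarith
  have e1: "1 + \<alpha> * Im a = Re a"
    using n d unfolding \<alpha>_def by (simp add: field_simps power2_eq_square; smt (verit))
  have "2 * \<alpha> + \<alpha>^2 * Im a = \<alpha> * (1 + (1 + \<alpha> * Im a))"
    by (simp add: algebra_simps power2_eq_square)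
  also have "\<dots> = \<alpha> * (1 + Re a)" using e1 by simp
  also have "\<dots> = - Im a" using d unfolding \<alpha>_def by simp
  finally have e2: "2 * \<alpha> + \<alpha>^2 * Im a = - Im a" .
  have q1: "Re z + \<alpha> * Im z + \<alpha> * (Im z + Im a * (Re z + \<alpha> * Im z)) = Re z * (1 + \<alpha> * Im a) + Im z * (2 * \<alpha> + \<alpha>^2 * Im a)"
    by (simp add: algebra_simps power2_eq_square)
  have q2: "Im z + Im a * (Re z + \<alpha> * Im z) = Im z * (1 + \<alpha> * Im a) + Im a * Re z"
    by (simp add: algebra_simps)
  have r1: "Re z + \<alpha> * Im z + \<alpha> * (Im z + Im a * (Re z + \<alpha> * Im z)) = Re a * Re z - Im a * Im z"
    unfolding q1 e1 e2 by (simp add: algebra_simps)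
  have r2: "Im z + Im a * (Re z + \<alpha> * Im z) = Re a * Im z + Im a * Re z"
    unfolding q2 e1 by (simp add: algebra_simps)
  have "a * z = Complex (Re a * Re z - Im a * Im z) (Re a * Im z + Im a * Re z)"
    by (simp add: complex_eq_iff)
  also have "\<dots> = Complex (Re z + \<alpha> * Im z + \<alpha> * (Im z + Im a * (Re z + \<alpha> * Im z))) (Im z + Im a * (Re z + \<alpha> * Im z))"
    by (subst r1, subst r2, rule refl)
  finally show ?thesis by simp
qed

lemma rot_invariant_aux:
  fixes a :: complex
  assumes Hm: "H \<in> borel_measurable (borel :: complex measure)"
    and a: "norm a = 1" "Re a \<noteq> -1"
  shows "(\<integral>\<^sup>+z. H (a * z) \<partial>lborel) = (\<integral>\<^sup>+z. H z \<partial>lborel)"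
proof -
  define \<alpha> where "\<alpha> = - Im a / (1 + Re a)"
  define Sx where "Sx = (\<lambda>z. Complex (Re z + \<alpha> * Im z) (Im z))"
  define Sy where "Sy = (\<lambda>z. Complex (Re z) (Im z + Im a * Re z))"
  have cx: "continuous_on UNIV Sx" unfolding Sx_def by (intro continuous_intros)
  have cy: "continuous_on UNIV Sy" unfolding Sy_def by (intro continuous_intros)
  have m1: "(\<lambda>z. H (Sx z)) \<in> borel_measurable borel" by (rule comp_cont_measurable[OF Hm cx])
  have m2: "(\<lambda>z. H (Sx (Sy z))) \<in> borel_measurable borel" by (rule comp_cont_measurable[OF m1 cy])
  have "(\<integral>\<^sup>+z. H (a * z) \<partial>lborel) = (\<integral>\<^sup>+z. H (Sx (Sy (Sx z))) \<partial>lborel)"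
    using rot_decomp[OF a] unfolding Sx_def Sy_def \<alpha>_def by simp
  also have "\<dots> = (\<integral>\<^sup>+z. H (Sx (Sy z)) \<partial>lborel)"
    using shear_x[OF m2, of \<alpha>] unfolding Sx_def by simp
  also have "\<dots> = (\<integral>\<^sup>+z. H (Sx z) \<partial>lborel)"
    using shear_y[OF m1, of "Im a"] unfolding Sy_def by simp
  also have "\<dots> = (\<integral>\<^sup>+z. H z \<partial>lborel)"
    using shear_x[OF Hm, of \<alpha>] unfolding Sx_def by simp
  finally show ?thesis .
qed

lemma rot_invariant:
  fixes a :: complex
  assumes Hm: "H \<in> borel_measurable (borel :: complex measure)"
    and a: "norm a = 1"
  shows "(\<integral>\<^sup>+z. H (a * z) \<partial>lborel) = (\<integral>\<^sup>+z. H z \<partial>lborel)"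
proof (cases "Re a = -1")
  case False
  then show ?thesis using rot_invariant_aux[OF Hm a] by simp
next
  case True
  then have "Im a = 0" using a by (simp add: cmod_def)
  then have a1: "a = \<i> * \<i>" using True by (simp add: complex_eq_iff)
  have m1: "(\<lambda>z. H (\<i> * z)) \<in> borel_measurable borel"
    by (rule comp_cont_measurable[OF Hm]) (intro continuous_intros)
  have "(\<integral>\<^sup>+z. H (a * z) \<partial>lborel) = (\<integral>\<^sup>+z. H (\<i> * (\<i> * z)) \<partial>lborel)"
    by (simp add: a1 mult.assoc)
  also have "\<dots> = (\<integral>\<^sup>+z. H (\<i> * z) \<partial>lborel)"
    using rot_invariant_aux[OF m1, of \<i>] by simp
  also have "\<dots> = (\<integral>\<^sup>+z. H z \<partial>lborel)"
    using rot_invariant_aux[OF Hm, of \<i>] by simp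
  finally show ?thesis .
qed

lemma transl_invariant:
  fixes b :: complex
  assumes Hm: "H \<in> borel_measurable (borel :: complex measure)"
  shows "(\<integral>\<^sup>+z. H (z + b) \<partial>lborel) = (\<integral>\<^sup>+z. H z \<partial>lborel)"
proof -
  have "(\<integral>\<^sup>+z. H z \<partial>lborel) = (\<integral>\<^sup>+z. H z \<partial>(distr lborel borel ((+) b)))"
    by (simp add: lborel_distr_plus)
  also have "\<dots> = (\<integral>\<^sup>+z. H (b + z) \<partial>lborel)"
    by (rule nn_integral_distr) (use Hm in auto)
  finally show ?thesis by (simp add: add.commute)
qed

lemma affine_invariant:
  fixes a b :: complex
  assumes Hm: "H \<in> borel_measurable (borel :: complex measure)"
    and a: "norm a = 1"
  shows "(\<integral>\<^sup>+z. H (a * z + b) \<partial>lborel) = (\<integral>\<^sup>+z. H z \<partial>lborel)"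
proof -
  have m1: "(\<lambda>z. H (z + b)) \<in> borel_measurable borel"
    by (rule comp_cont_measurable[OF Hm]) (intro continuous_intros)
  show ?thesis
    using rot_invariant[OF m1 a] transl_invariant[OF Hm] by simp
qed

lemma gauss1_finite:
  fixes c :: real assumes c: "c > 0"
  shows "(\<integral>\<^sup>+t. ennreal (exp (- c * t^2)) \<partial>lborel) < \<infinity>"
proof -
  define \<sigma> where "\<sigma> = sqrt (1 / (2 * c))"
  have s2: "\<sigma>^2 = 1 / (2 * c)" using c unfolding \<sigma>_def by simp
  have sp: "\<sigma> > 0" using c unfolding \<sigma>_def by simp
  interpret prob_space "density lborel (normal_density 0 \<sigma>)"
    using prob_space_normal_density sp by blast
  have one: "(\<integral>\<^sup>+t. ennreal (normal_density 0 \<sigma> t) \<partial>lborel) = 1"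
    using emeasure_space_1 by (simp add: emeasure_density)
  have eq: "exp (- c * t^2) = sqrt (2 * pi * \<sigma>^2) * normal_density 0 \<sigma> t" for t
    unfolding normal_density_def s2 using c by (simp add: field_simps)
  have "(\<integral>\<^sup>+t. ennreal (exp (- c * t^2)) \<partial>lborel)
      = (\<integral>\<^sup>+t. ennreal (sqrt (2 * pi * \<sigma>^2)) * ennreal (normal_density 0 \<sigma> t) \<partial>lborel)"
    by (intro nn_integral_cong) (metis eq ennreal_mult normal_density_nonneg real_sqrt_ge_zero mult_nonneg_nonneg pi_ge_zero zero_le_power2 zero_le_numeral)
  also have "\<dots> = ennreal (sqrt (2 * pi * \<sigma>^2)) * (\<integral>\<^sup>+t. ennreal (normal_density 0 \<sigma> t) \<partial>lborel)"
    by (rule nn_integral_cmult) simp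
  finally show ?thesis using one by (simp add: ennreal_mult_less_top)
qed

lemma gauss_finite:
  fixes c :: real assumes c: "c > 0"
  shows "(\<integral>\<^sup>+(z::complex). ennreal (exp (- c * (norm z)^2)) \<partial>lborel) < \<infinity>"
proof -
  have "(\<integral>\<^sup>+(z::complex). ennreal (exp (- c * (norm z)^2)) \<partial>lborel)
     = (\<integral>\<^sup>+(z::complex). (\<Prod>b\<in>Basis. ennreal (exp (- c * (z \<bullet> b)^2))) \<partial>lborel)"
    by (intro nn_integral_cong)
       (simp add: Basis_complex_def cmod_power2 algebra_simps exp_add[symmetric] ennreal_mult[symmetric])
  also have "\<dots> = (\<Prod>b\<in>(Basis::complex set). (\<integral>\<^sup>+t. ennreal (exp (- c * t^2)) \<partial>lborel))"
    by (rule nn_integral_lborel_prod) auto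
  finally show ?thesis
    using gauss1_finite[OF c] by (simp add: Basis_complex_def ennreal_mult_less_top)
qed

lemma powr_tangent:
  fixes m x p :: real
  assumes m: "m > 0" and x: "x \<ge> 0" and p: "p \<ge> 1"
  shows "m powr p + p * m powr (p - 1) * (x - m) \<le> x powr p"
proof (cases "x = 0")
  case True
  have "m powr p = m powr (p - 1) * m" using m by (simp add: powr_diff)
  then have "m powr p + p * m powr (p - 1) * (0 - m) = (1 - p) * m powr p" by (simp add: algebra_simps)
  also have "\<dots> \<le> 0" using p by (simp add: mult_nonpos_nonneg)
  finally show ?thesis using True by simp
next
  case False
  have "x powr p - m powr p \<ge> (p * m powr (p - 1)) * (x - m)"
  proof (rule convex_on_imp_above_tangent[OF powr_convex[OF p]])
    show "connected {0::real<..}" by simp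
    show "m \<in> interior {0<..}" using m by (simp add: interior_open)
    show "x \<in> {0<..}" using x False by simp
    show "((\<lambda>x. x powr p) has_field_derivative p * m powr (p - 1)) (at m within {0<..})"
      using m by (auto intro!: derivative_eq_intros)
  qed
  then show ?thesis by simp
qed

lemma jensen01:
  fixes F :: "real \<Rightarrow> real" and p :: real
  assumes p: "p \<ge> 1" and F: "F integrable_on {0..1}" "\<And>t. t \<in> {0..1} \<Longrightarrow> F t \<ge> 0"
    and Fp: "(\<lambda>t. F t powr p) integrable_on {0..1}"
  shows "(integral {0..1} F) powr p \<le> integral {0..1} (\<lambda>t. F t powr p)"
proof -
  define m where "m = integral {0..1} F"
  have m0: "m \<ge> 0" unfolding m_def using F by (intro integral_nonneg) auto
  show ?thesis
  proof (cases "m = 0")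
    case True
    have "0 \<le> integral {0..1} (\<lambda>t. F t powr p)" using Fp by (intro integral_nonneg) auto
    then show ?thesis using True m_def by simp
  next
    case False
    then have mp: "m > 0" using m0 by simp
    have le1: "integral {0..1} (\<lambda>t. m powr p + p * m powr (p - 1) * (F t - m)) \<le> integral {0..1} (\<lambda>t. F t powr p)"
      apply (rule integral_le)
      using F Fp mp p by (auto intro!: integrable_add integrable_mult_right integrable_diff powr_tangent)
    have hF: "(F has_integral m) {0..1}" using F(1) m_def by (simp add: has_integral_integral)
    have hc: "((\<lambda>t. c) has_integral c) {0..1::real}" for c
      using has_integral_const_real[of c 0 1] by simp
    have "((\<lambda>t. m powr p + p * m powr (p - 1) * (F t - m)) has_integral (m powr p + p * m powr (p - 1) * (m - m))) {0..1}"
      by (intro has_integral_add has_integral_mult_right has_integral_diff hF hc)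
    then have "integral {0..1} (\<lambda>t. m powr p + p * m powr (p - 1) * (F t - m)) = m powr p"
      by (simp add: integral_unique)
    with le1 show ?thesis unfolding m_def by simp
  qed
qed

lemma submean:
  fixes g :: "complex \<Rightarrow> complex" and u :: complex and p :: real
  assumes g: "g holomorphic_on UNIV" and p: "p \<ge> 1"
  shows "norm (g 0) powr p \<le> integral {0..1} (\<lambda>t. norm (g (u * exp (2 * of_real pi * \<i> * of_real t))) powr p)"
proof -
  define h where "h = (\<lambda>v. g (u * v))"
  have h: "h holomorphic_on UNIV" unfolding h_def
    by (rule holomorphic_on_compose_gen[OF _ g, unfolded o_def]) (auto intro: holomorphic_intros)
  have "((\<lambda>t. h (of_real 1 * exp (2 * of_real pi * \<i> * of_real t)) / (of_real 1 * exp (2 * of_real pi * \<i> * of_real t)) ^ 0)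
          has_integral ((deriv ^^ 0) h 0 / fact 0)) {0..1}"
    by (rule circle_coeff[OF h]) simp
  then have hi: "((\<lambda>t. g (u * exp (2 * of_real pi * \<i> * of_real t))) has_integral g 0) {0..1}"
    by (simp add: h_def)
  define F where "F = (\<lambda>t. norm (g (u * exp (2 * of_real pi * \<i> * of_real t))))"
  have cg: "continuous_on UNIV g" using g holomorphic_on_imp_continuous_on by blast
  have cF: "continuous_on {0..1} F" unfolding F_def
    by (intro continuous_intros continuous_on_compose2[OF cg]) auto
  have cFp: "continuous_on {0..1} (\<lambda>t. F t powr p)"
    by (rule continuous_on_powr'[OF cF]) (use p in \<open>auto simp: F_def\<close>)
  have "norm (g 0) \<le> integral {0..1} F"
    unfolding F_def
    using Henstock_Kurzweil_Integration.integral_norm_bound_integral[of "\<lambda>t. g (u * exp (2 * of_real pi * \<i> * of_real t))" "{0..1}" F] hi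
      integrable_continuous_interval[OF cF] by (auto simp: F_def integral_unique has_integral_integrable)
  then have "norm (g 0) powr p \<le> (integral {0..1} F) powr p"
    using p by (intro powr_mono2) auto
  also have "\<dots> \<le> integral {0..1} (\<lambda>t. F t powr p)"
    by (rule jensen01[OF p integrable_continuous_interval[OF cF] _ integrable_continuous_interval[OF cFp]]) (simp add: F_def)
  finally show ?thesis unfolding F_def .
qed

lemma holo_borel:
  fixes f :: "complex \<Rightarrow> complex"
  assumes "f holomorphic_on UNIV"
  shows "f \<in> borel_measurable borel"
  using assms holomorphic_on_imp_continuous_on borel_measurable_continuous_onI by blast

lemma fint_meas:
  fixes f :: "complex \<Rightarrow> complex"
  assumes "f holomorphic_on UNIV"
  shows "(\<lambda>z. ennreal (norm (f z) powr p * exp (- p * (norm z)\<^sup>2 / 2))) \<in> borel_measurable borel"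
proof -
  have [measurable]: "f \<in> borel_measurable borel" using holo_borel[OF assms] .
  show ?thesis by measurable
qed

lemma cmod_add_sq:
  fixes x y :: complex
  shows "(norm (x + y))\<^sup>2 = (norm x)\<^sup>2 + 2 * Re (cnj x * y) + (norm y)\<^sup>2"
  unfolding cmod_power2 by (simp add: power2_eq_square algebra_simps)

lemma exp_powr': "exp (x::real) powr p = exp (p * x)"
  by (simp add: powr_def)

lemma fock1_finite:
  assumes "p > 0"
  shows "fock_integral p (\<lambda>_. 1) < \<infinity>"
proof -
  have "fock_integral p (\<lambda>_. 1) = (\<integral>\<^sup>+(z::complex). ennreal (exp (- (p/2) * (norm z)^2)) \<partial>lborel)"
    unfolding fock_integral_def by (intro nn_integral_cong) (simp add: field_simps)
  then show ?thesis using gauss_finite[of "p/2"] assms by simp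
qed

lemma kernel_integral:
  fixes \<zeta> :: complex
  shows "fock_integral p (\<lambda>u. exp (cnj \<zeta> * u)) = ennreal (exp (p * (norm \<zeta>)\<^sup>2 / 2)) * fock_integral p (\<lambda>_. 1)"
proof -
  define G where "G = (\<lambda>v::complex. ennreal (norm (1::complex) powr p * exp (- p * (norm v)\<^sup>2 / 2)))"
  have Gm: "G \<in> borel_measurable borel" unfolding G_def
    by (rule fint_meas) (auto intro: holomorphic_intros)
  have pt: "ennreal (norm (exp (cnj \<zeta> * u)) powr p * exp (- p * (norm u)\<^sup>2 / 2))
        = ennreal (exp (p * (norm \<zeta>)\<^sup>2 / 2)) * G (u + (- \<zeta>))" for u
  proof -
    have sq: "(norm (u + - \<zeta>))\<^sup>2 = (norm u)\<^sup>2 - 2 * Re (cnj \<zeta> * u) + (norm \<zeta>)\<^sup>2"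
      using cmod_add_sq[of u "- \<zeta>"] by (simp add: algebra_simps)
    have "norm (exp (cnj \<zeta> * u)) powr p * exp (- p * (norm u)\<^sup>2 / 2)
        = exp (p * Re (cnj \<zeta> * u) + (- p * (norm u)\<^sup>2 / 2))"
      unfolding norm_exp_eq_Re exp_powr' exp_add ..
    also have "\<dots> = exp (p * (norm \<zeta>)\<^sup>2 / 2) * exp (- p * (norm (u + - \<zeta>))\<^sup>2 / 2)"
      unfolding sq exp_add[symmetric] by (simp add: field_simps)
    finally show ?thesis unfolding G_def by (simp add: ennreal_mult)
  qed
  have "fock_integral p (\<lambda>u. exp (cnj \<zeta> * u)) = (\<integral>\<^sup>+u. ennreal (exp (p * (norm \<zeta>)\<^sup>2 / 2)) * G (u + (- \<zeta>)) \<partial>lborel)"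
    unfolding fock_integral_def pt ..
  also have "\<dots> = ennreal (exp (p * (norm \<zeta>)\<^sup>2 / 2)) * (\<integral>\<^sup>+u. G (u + (- \<zeta>)) \<partial>lborel)"
    by (rule nn_integral_cmult) (use comp_cont_measurable[OF Gm continuous_on_add[OF continuous_on_id continuous_on_const, of UNIV "- \<zeta>"]] in simp)
  also have "(\<integral>\<^sup>+u. G (u + (- \<zeta>)) \<partial>lborel) = (\<integral>\<^sup>+u. G u \<partial>lborel)"
    by (rule transl_invariant[OF Gm])
  also have "(\<integral>\<^sup>+u. G u \<partial>lborel) = fock_integral p (\<lambda>_. 1)"
    unfolding fock_integral_def G_def by simp
  finally show ?thesis .
qed

lemma kernel_in_fock:
  assumes "p > 0"
  shows "(\<lambda>u. exp (cnj \<zeta> * u)) \<in> fock_space p"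
  unfolding fock_space_def using kernel_integral[of p \<zeta>] fock1_finite[OF assms]
  by (auto intro!: holomorphic_intros simp: ennreal_mult_less_top)

lemma one_in_fock:
  assumes "p > 0"
  shows "(\<lambda>u. 1) \<in> fock_space p"
  unfolding fock_space_def using fock1_finite[OF assms] by auto

lemma kernel_norm:
  assumes p: "p > 0"
  shows "fock_norm p (\<lambda>u. exp (cnj \<zeta> * u)) = exp ((norm \<zeta>)\<^sup>2 / 2) * fock_norm p (\<lambda>_. 1)"
proof -
  define X where "X = enn2real (fock_integral p (\<lambda>_. 1))"
  have X0: "X \<ge> 0" unfolding X_def by simp
  have "fock_norm p (\<lambda>u. exp (cnj \<zeta> * u)) = (exp (p * (norm \<zeta>)\<^sup>2 / 2) * (p / (2 * pi) * X)) powr (1 / p)"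
    unfolding fock_norm_def kernel_integral X_def by (simp add: enn2real_mult algebra_simps)
  also have "\<dots> = exp (p * (norm \<zeta>)\<^sup>2 / 2) powr (1/p) * (p / (2 * pi) * X) powr (1 / p)"
    using X0 p by (intro powr_mult; auto)
  also have "exp (p * (norm \<zeta>)\<^sup>2 / 2) powr (1/p) = exp ((norm \<zeta>)\<^sup>2 / 2)"
    using p by (simp add: exp_powr')
  finally show ?thesis unfolding fock_norm_def X_def by simp
qed

lemma nn01:
  fixes F :: "real \<Rightarrow> real"
  assumes cF: "continuous_on UNIV F" and F0: "\<And>t. F t \<ge> 0"
  shows "(\<integral>\<^sup>+t. indicator {0..1} t * ennreal (F t) \<partial>lborel) = ennreal (integral {0..1} F)"
proof -
  have Fm: "F \<in> borel_measurable borel" using cF by (rule borel_measurable_continuous_onI)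
  have int: "(F has_integral integral {0..1} F) {0..1}"
    using integrable_continuous_interval[OF continuous_on_subset[OF cF]] by (simp add: has_integral_integral)
  have eqf: "(\<lambda>t. indicator {0..1} t * F t) = (\<lambda>x. if x \<in> {0..1} then F x else 0)"
    by (auto simp: indicator_def)
  have "((\<lambda>t. indicator {0..1} t * F t) has_integral integral {0..1} F) UNIV"
    unfolding eqf has_integral_restrict_UNIV by (rule int)
  then have "integral\<^sup>N lborel (\<lambda>t. ennreal (indicator {0..1} t * F t)) = ennreal (integral {0..1} F)"
    by (rule nn_integral_has_integral_lborel[rotated 2]) (use Fm F0 in auto)
  moreover have "(\<lambda>t. indicator {0..1} t * ennreal (F t)) = (\<lambda>t. ennreal (indicator {0..1} t * F t))"
    by (auto simp: indicator_def)
  ultimately show ?thesis by simp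
qed

lemma ball_mass:
  "(\<integral>\<^sup>+u. indicator (ball (0::complex) 1) u * ennreal (norm (g u) powr p) \<partial>lborel)
     \<ge> ennreal (norm (g 0) powr p) * emeasure lborel (ball (0::complex) 1)"
  if g: "g holomorphic_on UNIV" and p: "p \<ge> 1" for g :: "complex \<Rightarrow> complex" and p :: real
proof -
  define e where "e = (\<lambda>t::real. exp (2 * of_real pi * \<i> * of_real t) :: complex)"
  have ne: "norm (e t) = 1" for t unfolding e_def by (simp add: norm_exp_eq_Re)
  define \<Phi> where "\<Phi> = (\<lambda>u. indicator (ball (0::complex) 1) u * ennreal (norm (g u) powr p))"
  have [measurable]: "g \<in> borel_measurable borel" using holo_borel[OF g] .
  have [measurable]: "ball (0::complex) 1 \<in> sets borel" by simp
  have \<Phi>m: "\<Phi> \<in> borel_measurable borel" unfolding \<Phi>_def by measurable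
  have ce: "continuous_on UNIV e" unfolding e_def by (intro continuous_intros)
  have rot: "(\<integral>\<^sup>+u. \<Phi> (e t * u) \<partial>lborel) = (\<integral>\<^sup>+u. \<Phi> u \<partial>lborel)" for t
    by (rule rot_invariant[OF \<Phi>m ne])
  have m1: "(\<lambda>u. \<Phi> (e t * u)) \<in> borel_measurable lborel" for t
    using comp_cont_measurable[OF \<Phi>m, of "\<lambda>u. e t * u"] by (simp add: continuous_intros)
  have sets_eq: "sets (lborel \<Otimes>\<^sub>M lborel) = sets (borel :: (real \<times> complex) measure)"
    by (metis borel_prod sets_lborel sets_pair_measure_cong)
  have m2: "(\<lambda>q::real \<times> complex. \<Phi> (e (fst q) * snd q)) \<in> borel_measurable (lborel \<Otimes>\<^sub>M lborel)"
  proof -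
    have "continuous_on UNIV (\<lambda>q::real \<times> complex. e (fst q) * snd q)"
      by (intro continuous_intros continuous_on_compose2[OF ce]) auto
    then have "(\<lambda>q::real \<times> complex. e (fst q) * snd q) \<in> borel_measurable borel"
      by (rule borel_measurable_continuous_onI)
    then have "(\<lambda>q::real \<times> complex. \<Phi> (e (fst q) * snd q)) \<in> borel_measurable borel"
      using measurable_compose[OF _ \<Phi>m] by blast
    then show ?thesis using measurable_cong_sets[OF sets_eq refl] by blast
  qed
  have m3: "(\<lambda>q::real \<times> complex. indicator {0..1} (fst q) * \<Phi> (e (fst q) * snd q)) \<in> borel_measurable (lborel \<Otimes>\<^sub>M lborel)"
    using m2 by measurable
  have "(\<integral>\<^sup>+u. \<Phi> u \<partial>lborel) = (\<integral>\<^sup>+(t::real). (\<integral>\<^sup>+u. \<Phi> u \<partial>lborel) * indicator {0..1} t \<partial>lborel)"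
    by (subst nn_integral_cmult_indicator) auto
  also have "\<dots> = (\<integral>\<^sup>+t. indicator {0..1} t * (\<integral>\<^sup>+u. \<Phi> (e t * u) \<partial>lborel) \<partial>lborel)"
    by (intro nn_integral_cong) (subst rot, rule mult.commute)
  also have "\<dots> = (\<integral>\<^sup>+t. (\<integral>\<^sup>+u. indicator {0..1} t * \<Phi> (e t * u) \<partial>lborel) \<partial>lborel)"
    by (intro nn_integral_cong nn_integral_cmult[symmetric] m1)
  also have "\<dots> = (\<integral>\<^sup>+u. (\<integral>\<^sup>+t. indicator {0..1} t * \<Phi> (e t * u) \<partial>lborel) \<partial>lborel)"
    using lborel_pair.Fubini'[of "\<lambda>t u. indicator {0..1} t * \<Phi> (e t * u)"] m3
    by (simp add: case_prod_beta')
  also have "\<dots> \<ge> (\<integral>\<^sup>+(u::complex). ennreal (norm (g 0) powr p) * indicator (ball 0 1) u \<partial>lborel)"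
  proof (rule nn_integral_mono)
    fix u :: complex
    show "ennreal (norm (g 0) powr p) * indicator (ball 0 1) u \<le> (\<integral>\<^sup>+t. indicator {0..1} t * \<Phi> (e t * u) \<partial>lborel)"
    proof (cases "u \<in> ball 0 1")
      case False then show ?thesis by simp
    next
      case True
      have "e t * u \<in> ball 0 1" for t using True by (simp add: norm_mult ne)
      then have "(\<integral>\<^sup>+t. indicator {0..1} t * \<Phi> (e t * u) \<partial>lborel)
          = (\<integral>\<^sup>+t. indicator {0..1} t * ennreal (norm (g (u * exp (2 * of_real pi * \<i> * of_real t))) powr p) \<partial>lborel)"
        unfolding \<Phi>_def e_def by (simp add: mult.commute)
      also have "\<dots> = ennreal (integral {0..1} (\<lambda>t. norm (g (u * exp (2 * of_real pi * \<i> * of_real t))) powr p))"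
      proof (rule nn01)
        have cg: "continuous_on UNIV g" using g holomorphic_on_imp_continuous_on by blast
        have "continuous_on UNIV (\<lambda>t. norm (g (u * exp (2 * of_real pi * \<i> * of_real t))))"
          by (intro continuous_intros continuous_on_compose2[OF cg]) auto
        then show "continuous_on UNIV (\<lambda>t. norm (g (u * exp (2 * of_real pi * \<i> * of_real t))) powr p)"
          by (rule continuous_on_powr') (use p in auto)
      qed simp
      also have "\<dots> \<ge> ennreal (norm (g 0) powr p)"
        using submean[OF g p, of u] by (rule ennreal_leI)
      finally show ?thesis using True by simp
    qed
  qed
  also have "(\<integral>\<^sup>+(u::complex). ennreal (norm (g 0) powr p) * indicator (ball 0 1) u \<partial>lborel) = ennreal (norm (g 0) powr p) * emeasure lborel (ball (0::complex) 1)"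
    by (rule nn_integral_cmult_indicator) simp
  finally show ?thesis unfolding \<Phi>_def .
qed

lemma point_est_int:
  fixes f :: "complex \<Rightarrow> complex" and p :: real
  assumes f: "f holomorphic_on UNIV" and p: "p \<ge> 1"
  shows "ennreal (exp (- p / 2) * (norm (f z) * exp (- (norm z)\<^sup>2 / 2)) powr p * unit_ball_vol 2) \<le> fock_integral p f"
proof -
  define G where "G = (\<lambda>v. ennreal (norm (f v) powr p * exp (- p * (norm v)\<^sup>2 / 2)))"
  have Gm: "G \<in> borel_measurable borel" unfolding G_def by (rule fint_meas[OF f])
  define g where "g = (\<lambda>u. f (u + z) * exp (- cnj z * u - of_real ((norm z)\<^sup>2 / 2)))"
  have g: "g holomorphic_on UNIV" unfolding g_def
    by (intro holomorphic_intros holomorphic_on_compose_gen[OF _ f, unfolded o_def]) auto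
  have eqG: "G (u + z) = ennreal (norm (g u) powr p * exp (- p * (norm u)\<^sup>2 / 2))" for u
  proof -
    have ng: "norm (g u) = norm (f (u + z)) * exp (- Re (cnj z * u) - (norm z)\<^sup>2 / 2)"
      unfolding g_def by (simp add: norm_mult norm_exp_eq_Re)
    have sq: "(norm (u + z))\<^sup>2 = (norm u)\<^sup>2 + 2 * Re (cnj z * u) + (norm z)\<^sup>2"
      using cmod_add_sq[of u z] by (simp add: mult.commute)
    have "norm (g u) powr p * exp (- p * (norm u)\<^sup>2 / 2)
        = norm (f (u + z)) powr p * (exp (p * (- Re (cnj z * u) - (norm z)\<^sup>2 / 2)) * exp (- p * (norm u)\<^sup>2 / 2))"
      unfolding ng by (simp add: powr_mult exp_powr')
    also have "exp (p * (- Re (cnj z * u) - (norm z)\<^sup>2 / 2)) * exp (- p * (norm u)\<^sup>2 / 2) = exp (- p * (norm (u + z))\<^sup>2 / 2)"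
      unfolding sq exp_add[symmetric] by (simp add: field_simps)
    finally show ?thesis unfolding G_def by simp
  qed
  have g0: "norm (g 0) = norm (f z) * exp (- (norm z)\<^sup>2 / 2)"
    unfolding g_def by (simp add: norm_mult norm_exp_eq_Re)
  define \<Phi> where "\<Phi> = (\<lambda>u. indicator (ball (0::complex) 1) u * ennreal (norm (g u) powr p))"
  have [measurable]: "g \<in> borel_measurable borel" using holo_borel[OF g] .
  have [measurable]: "ball (0::complex) 1 \<in> sets borel" by simp
  have \<Phi>m: "\<Phi> \<in> borel_measurable borel" unfolding \<Phi>_def by measurable
  have "ennreal (exp (- p / 2)) * (ennreal (norm (g 0) powr p) * emeasure lborel (ball (0::complex) 1))
      \<le> ennreal (exp (- p / 2)) * (\<integral>\<^sup>+u. \<Phi> u \<partial>lborel)"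
    using ball_mass[OF g p] unfolding \<Phi>_def by (rule mult_left_mono) simp
  also have "\<dots> = (\<integral>\<^sup>+u. ennreal (exp (- p / 2)) * \<Phi> u \<partial>lborel)"
    by (rule nn_integral_cmult[symmetric]) (use \<Phi>m in simp)
  also have "\<dots> \<le> (\<integral>\<^sup>+u. G (u + z) \<partial>lborel)"
  proof (rule nn_integral_mono)
    fix u :: complex
    show "ennreal (exp (- p / 2)) * \<Phi> u \<le> G (u + z)"
    proof (cases "u \<in> ball 0 1")
      case True
      then have "(norm u)\<^sup>2 \<le> 1" by (simp add: abs_square_le_1)
      then have "exp (- p / 2) \<le> exp (- p * (norm u)\<^sup>2 / 2)" using p by (simp add: mult_left_mono)
      then have "exp (- p / 2) * norm (g u) powr p \<le> norm (g u) powr p * exp (- p * (norm u)\<^sup>2 / 2)"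
        by (simp add: mult.commute mult_left_mono)
      then show ?thesis using True unfolding eqG \<Phi>_def
        by (simp add: ennreal_mult[symmetric] ennreal_leI)
    qed (simp add: \<Phi>_def)
  qed
  also have "\<dots> = fock_integral p f"
    unfolding fock_integral_def using transl_invariant[OF Gm, of z] by (simp add: G_def)
  finally have fin: "ennreal (exp (- p / 2)) * (ennreal ((norm (f z) * exp (- (norm z)\<^sup>2 / 2)) powr p) * ennreal (unit_ball_vol 2)) \<le> fock_integral p f"
    unfolding g0 using emeasure_ball[where c="0::complex" and r=1] by simp
  have "ennreal (exp (- p / 2) * (norm (f z) * exp (- (norm z)\<^sup>2 / 2)) powr p * unit_ball_vol 2)
     = ennreal (exp (- p / 2)) * (ennreal ((norm (f z) * exp (- (norm z)\<^sup>2 / 2)) powr p) * ennreal (unit_ball_vol 2))"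
    by (simp add: ennreal_mult mult.assoc)
  then show ?thesis using fin by simp
qed

definition PK :: "real \<Rightarrow> real" where
  "PK p = (2 * pi / p * (exp (p / 2) / unit_ball_vol 2)) powr (1 / p)"

lemma PK_pos: "PK p \<ge> 0" unfolding PK_def by simp

lemma point_est:
  fixes f :: "complex \<Rightarrow> complex" and p :: real
  assumes p: "p \<ge> 1" and f: "f \<in> fock_space p"
  shows "norm (f z) * exp (- (norm z)\<^sup>2 / 2) \<le> PK p * fock_norm p f"
proof -
  have fh: "f holomorphic_on UNIV" and fin: "fock_integral p f < \<infinity>" using f unfolding fock_space_def by auto
  define X where "X = norm (f z) * exp (- (norm z)\<^sup>2 / 2)"
  define E where "E = enn2real (fock_integral p f)"
  define v where "v = unit_ball_vol 2"
  have v: "v > 0" unfolding v_def by simp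
  have X0: "X \<ge> 0" unfolding X_def by simp
  have E0: "E \<ge> 0" unfolding E_def by simp
  have IE: "fock_integral p f = ennreal E" unfolding E_def using fin by (simp add: ennreal_enn2real_if)
  have "ennreal (exp (- p / 2) * X powr p * v) \<le> ennreal E"
    using point_est_int[OF fh p, of z] unfolding X_def v_def IE .
  then have A: "exp (- p / 2) * X powr p * v \<le> E" using E0 by (simp add: ennreal_le_iff)
  define c where "c = exp (p / 2) / v"
  have Xp: "X powr p \<le> c * E"
  proof -
    have "X powr p = (exp (- p / 2) * X powr p * v) * c"
      unfolding c_def using v by (simp add: field_simps exp_minus)
    also have "\<dots> \<le> E * c" using A v unfolding c_def by (intro mult_right_mono) auto
    finally show ?thesis by (simp add: mult.commute)
  qed
  have "X = (X powr p) powr (1 / p)" using p X0 by (simp add: powr_powr)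
  also have "\<dots> \<le> (c * E) powr (1 / p)" using Xp p by (intro powr_mono2) auto
  also have "c * E = (2 * pi / p * c) * (p / (2 * pi) * E)" using p by (simp add: field_simps)
  also have "((2 * pi / p * c) * (p / (2 * pi) * E)) powr (1 / p) = (2 * pi / p * c) powr (1 / p) * (p / (2 * pi) * E) powr (1 / p)"
    using p v E0 unfolding c_def by (intro powr_mult; auto)
  finally show ?thesis unfolding X_def PK_def fock_norm_def E_def c_def v_def .
qed

lemma wcomp_holo:
  assumes "w holomorphic_on UNIV" "\<phi> holomorphic_on UNIV" "f holomorphic_on UNIV"
  shows "wcomp w \<phi> f holomorphic_on UNIV"
  unfolding wcomp_def
  by (intro holomorphic_intros assms holomorphic_on_compose_gen[OF assms(2) assms(3), unfolded o_def]) auto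

lemma affine_integral:
  fixes a b c :: complex and p :: real
  assumes a: "norm a = 1" and f: "f holomorphic_on UNIV"
  shows "fock_integral p (wcomp (\<lambda>z. c * exp (- cnj b * a * z)) (\<lambda>z. a * z + b) f)
       = ennreal (norm c powr p * exp (p * (norm b)\<^sup>2 / 2)) * fock_integral p f"
proof -
  define G where "G = (\<lambda>v. ennreal (norm (f v) powr p * exp (- p * (norm v)\<^sup>2 / 2)))"
  have Gm: "G \<in> borel_measurable borel" unfolding G_def by (rule fint_meas[OF f])
  define K where "K = norm c powr p * exp (p * (norm b)\<^sup>2 / 2)"
  have K0: "K \<ge> 0" unfolding K_def by simp
  have pt: "ennreal (norm (wcomp (\<lambda>z. c * exp (- cnj b * a * z)) (\<lambda>z. a * z + b) f z) powr p * exp (- p * (norm z)\<^sup>2 / 2))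
      = ennreal K * G (a * z + b)" for z
  proof -
    have re: "Re (cnj (a * z) * b) = Re (cnj b * a * z)" by (simp add: algebra_simps)
    have sq: "(norm (a * z + b))\<^sup>2 = (norm z)\<^sup>2 + 2 * Re (cnj b * a * z) + (norm b)\<^sup>2"
      using cmod_add_sq[of "a * z" b] a re by (simp add: norm_mult)
    define r where "r = Re (cnj b * a * z)"
    have n1: "norm (wcomp (\<lambda>z. c * exp (- cnj b * a * z)) (\<lambda>z. a * z + b) f z) = norm c * exp (- r) * norm (f (a * z + b))"
      unfolding r_def wcomp_def by (simp add: norm_mult norm_exp_eq_Re)
    have "norm (wcomp (\<lambda>z. c * exp (- cnj b * a * z)) (\<lambda>z. a * z + b) f z) powr p * exp (- p * (norm z)\<^sup>2 / 2)
       = norm c powr p * norm (f (a * z + b)) powr p * (exp (p * (- r)) * exp (- p * (norm z)\<^sup>2 / 2))"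
      unfolding n1 by (simp add: powr_mult exp_powr')
    also have "exp (p * (- r)) * exp (- p * (norm z)\<^sup>2 / 2) = exp (p * (norm b)\<^sup>2 / 2) * exp (- p * (norm (a * z + b))\<^sup>2 / 2)"
      unfolding sq r_def[symmetric] exp_add[symmetric] by (simp add: field_simps)
    finally show ?thesis unfolding G_def K_def using K0
      by (simp add: ennreal_mult[symmetric] mult_ac)
  qed
  have m: "(\<lambda>z. G (a * z + b)) \<in> borel_measurable lborel"
    using comp_cont_measurable[OF Gm, of "\<lambda>z. a * z + b"] by (simp add: continuous_intros)
  have "fock_integral p (wcomp (\<lambda>z. c * exp (- cnj b * a * z)) (\<lambda>z. a * z + b) f)
      = (\<integral>\<^sup>+z. ennreal K * G (a * z + b) \<partial>lborel)"
    unfolding fock_integral_def pt ..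
  also have "\<dots> = ennreal K * (\<integral>\<^sup>+z. G (a * z + b) \<partial>lborel)"
    by (rule nn_integral_cmult[OF m])
  also have "(\<integral>\<^sup>+z. G (a * z + b) \<partial>lborel) = fock_integral p f"
    using affine_invariant[OF Gm a, of b] unfolding fock_integral_def G_def by simp
  finally show ?thesis unfolding K_def .
qed

lemma affine_bounded:
  fixes a b c :: complex and p :: real
  assumes p: "p \<ge> 1" and a: "norm a = 1"
  shows "fock_bounded_op p (wcomp (\<lambda>z. c * exp (- cnj b * a * z)) (\<lambda>z. a * z + b))"
proof -
  define T where "T = wcomp (\<lambda>z. c * exp (- cnj b * a * z)) (\<lambda>z. a * z + b)"
  define K where "K = norm c powr p * exp (p * (norm b)\<^sup>2 / 2)"
  have K0: "K \<ge> 0" unfolding K_def by simp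
  have hw: "(\<lambda>z. c * exp (- cnj b * a * z)) holomorphic_on UNIV" by (intro holomorphic_intros)
  have hp: "(\<lambda>z. a * z + b) holomorphic_on UNIV" by (intro holomorphic_intros)
  have I: "fock_integral p (T f) = ennreal K * fock_integral p f" if "f \<in> fock_space p" for f
    using affine_integral[OF a, of f p c b] that unfolding T_def K_def fock_space_def by auto
  have maps: "T f \<in> fock_space p" if f: "f \<in> fock_space p" for f
  proof -
    have "T f holomorphic_on UNIV" unfolding T_def
      using wcomp_holo[OF hw hp] f unfolding fock_space_def by auto
    moreover have "fock_integral p (T f) < \<infinity>"
      using I[OF f] f unfolding fock_space_def by (simp add: ennreal_mult_less_top)
    ultimately show ?thesis unfolding fock_space_def by simp
  qed
  have bd: "fock_norm p (T f) \<le> K powr (1 / p) * fock_norm p f" if f: "f \<in> fock_space p" for f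
  proof -
    define E where "E = enn2real (fock_integral p f)"
    have E0: "E \<ge> 0" unfolding E_def by simp
    have "fock_norm p (T f) = (K * (p / (2 * pi) * E)) powr (1 / p)"
      unfolding fock_norm_def I[OF f] E_def using K0 by (simp add: enn2real_mult mult_ac)
    also have "\<dots> = K powr (1 / p) * (p / (2 * pi) * E) powr (1 / p)"
      using K0 E0 p by (intro powr_mult; auto)
    finally show ?thesis unfolding fock_norm_def E_def by simp
  qed
  show ?thesis
    unfolding fock_bounded_op_def T_def[symmetric]
  proof (intro conjI ballI allI)
    show "\<And>f. f \<in> fock_space p \<Longrightarrow> T f \<in> fock_space p" by (rule maps)
    show "\<And>f g. T (\<lambda>z. f z + g z) = (\<lambda>z. T f z + T g z)"
      unfolding T_def wcomp_def by (simp add: algebra_simps)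
    show "\<And>c f. T (\<lambda>z. c * f z) = (\<lambda>z. c * T f z)"
      unfolding T_def wcomp_def by (simp add: algebra_simps)
    show "\<exists>C. \<forall>f\<in>fock_space p. fock_norm p (T f) \<le> C * fock_norm p f"
      using bd by blast
  qed
qed

lemma sufficiency:
  fixes a b :: complex and p :: real and w \<phi> :: "complex \<Rightarrow> complex"
  assumes p: "p \<ge> 1" and a: "norm a = 1" and \<phi>: "\<forall>z. \<phi> z = a * z + b" and w0: "w 0 \<noteq> 0"
    and w: "\<forall>z. w z = w 0 * exp (- cnj b * a * z)"
  shows "fock_invertible_op p (wcomp w \<phi>)"
proof -
  define c where "c = w 0"
  have T: "wcomp w \<phi> = wcomp (\<lambda>z. c * exp (- cnj b * a * z)) (\<lambda>z. a * z + b)"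
    using \<phi> w unfolding c_def wcomp_def by (intro ext) metis
  have aa: "a * cnj a = 1"
    using a complex_norm_square[of a] by simp
  define a' where "a' = cnj a"
  define b' where "b' = - cnj a * b"
  define c' where "c' = exp (- cnj b * b) / c"
  have a': "norm a' = 1" unfolding a'_def using a by simp
  define S where "S = wcomp (\<lambda>z. c' * exp (- cnj b' * a' * z)) (\<lambda>z. a' * z + b')"
  have c0: "c \<noteq> 0" using w0 unfolding c_def .
  have ST: "S (wcomp (\<lambda>z. c * exp (- cnj b * a * z)) (\<lambda>z. a * z + b) f) = f" for f
  proof (rule ext)
    fix u
    have e1: "a * (a' * u + b') + b = u"
      unfolding a'_def b'_def using aa by algebra
    have e2: "- cnj b' * a' * u + (- cnj b * a * (a' * u + b')) + (- cnj b * b) = 0"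
      unfolding a'_def b'_def using aa by (simp; algebra)
    have "c' * exp (- cnj b' * a' * u) * (c * exp (- cnj b * a * (a' * u + b'))) = 1"
    proof -
      have "c' * exp (- cnj b' * a' * u) * (c * exp (- cnj b * a * (a' * u + b')))
          = (c' * c) * exp (- cnj b' * a' * u + (- cnj b * a * (a' * u + b')))"
        unfolding exp_add by (simp add: mult_ac)
      also have "c' * c = exp (- cnj b * b)" unfolding c'_def using c0 by simp
      also have "exp (- cnj b * b) * exp (- cnj b' * a' * u + (- cnj b * a * (a' * u + b'))) = 1"
        using e2 by (simp add: exp_add[symmetric] add.commute add.left_commute)
      finally show ?thesis .
    qed
    then show "S (wcomp (\<lambda>z. c * exp (- cnj b * a * z)) (\<lambda>z. a * z + b) f) u = f u"
      unfolding S_def wcomp_def e1 by (simp add: mult.assoc[symmetric])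
  qed
  have TS: "wcomp (\<lambda>z. c * exp (- cnj b * a * z)) (\<lambda>z. a * z + b) (S f) = f" for f
  proof (rule ext)
    fix z
    have e1: "a' * (a * z + b) + b' = z"
      unfolding a'_def b'_def using aa by algebra
    have e2: "- cnj b * a * z + (- cnj b' * a' * (a * z + b)) + (- cnj b * b) = 0"
      unfolding a'_def b'_def using aa by (simp; algebra)
    have "c * exp (- cnj b * a * z) * (c' * exp (- cnj b' * a' * (a * z + b))) = 1"
    proof -
      have "c * exp (- cnj b * a * z) * (c' * exp (- cnj b' * a' * (a * z + b)))
          = (c' * c) * exp (- cnj b * a * z + (- cnj b' * a' * (a * z + b)))"
        unfolding exp_add by (simp add: mult_ac)
      also have "c' * c = exp (- cnj b * b)" unfolding c'_def using c0 by simp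
      also have "exp (- cnj b * b) * exp (- cnj b * a * z + (- cnj b' * a' * (a * z + b))) = 1"
        using e2 by (simp add: exp_add[symmetric] add.commute add.left_commute)
      finally show ?thesis .
    qed
    then show "wcomp (\<lambda>z. c * exp (- cnj b * a * z)) (\<lambda>z. a * z + b) (S f) z = f z"
      unfolding S_def wcomp_def e1 by (simp add: mult.assoc[symmetric])
  qed
  show ?thesis
    unfolding fock_invertible_op_def T
    using affine_bounded[OF p a] affine_bounded[OF p a', of c' b'] ST TS
    unfolding S_def by blast
qed

lemma gauss_decay:
  fixes c K :: real assumes c: "c > 0"
  shows "((\<lambda>z::complex. K * exp (- c * (norm z)\<^sup>2)) \<longlongrightarrow> 0) at_infinity"
proof -
  have r: "((\<lambda>x::real. K * exp (- c * x\<^sup>2)) \<longlongrightarrow> 0) at_top"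
    using c by real_asymp
  have "filterlim (\<lambda>z::complex. norm z) at_top at_infinity"
    by (rule filterlim_at_infinity_imp_norm_at_top) (simp add: filterlim_ident)
  from filterlim_compose[OF r this] show ?thesis by (simp add: o_def)
qed

lemma mean_Re:
  fixes h :: "complex \<Rightarrow> complex" and r :: real
  assumes h: "h holomorphic_on UNIV" and r: "r > 0"
  shows "((\<lambda>t. Re (h (of_real r * exp (2 * of_real pi * \<i> * of_real t)))) has_integral Re (h 0)) {0..1}"
proof -
  have "((\<lambda>t. h (of_real r * exp (2 * of_real pi * \<i> * of_real t)) / (of_real r * exp (2 * of_real pi * \<i> * of_real t)) ^ 0)
          has_integral ((deriv ^^ 0) h 0 / fact 0)) {0..1}"
    by (rule circle_coeff[OF h r])
  then have "((\<lambda>t. h (of_real r * exp (2 * of_real pi * \<i> * of_real t))) has_integral h 0) {0..1}" by simp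
  then show ?thesis by (rule has_integral_Re)
qed

lemma higher_deriv_zero:
  fixes \<phi> h :: "complex \<Rightarrow> complex" and A :: real
  assumes \<phi>: "\<phi> holomorphic_on UNIV" and h: "h holomorphic_on UNIV"
    and bd: "\<And>z. (norm (\<phi> z))\<^sup>2 + 2 * Re (h z) \<le> (norm z)\<^sup>2 + A"
    and n: "n \<ge> 2"
  shows "(deriv ^^ n) \<phi> 0 = 0"
proof (rule ccontr)
  assume nz: "(deriv ^^ n) \<phi> 0 \<noteq> 0"
  define d where "d = norm ((deriv ^^ n) \<phi> 0 / fact n)"
  have d: "d > 0" using nz unfolding d_def by simp
  define B where "B = A - 2 * Re (h 0)"
  have cphi: "continuous_on UNIV \<phi>" using \<phi> holomorphic_on_imp_continuous_on by blast
  have key: "d * r ^ n \<le> r + B / (2 * r)" if r: "r > 0" for r :: real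
  proof -
    define \<gamma> where "\<gamma> = (\<lambda>t::real. of_real r * exp (2 * of_real pi * \<i> * of_real t) :: complex)"
    have ng: "norm (\<gamma> t) = r" for t unfolding \<gamma>_def using r by (simp add: norm_mult norm_exp_eq_Re)
    have cg: "continuous_on UNIV \<gamma>" unfolding \<gamma>_def by (intro continuous_intros)
    have cpg: "continuous_on UNIV (\<lambda>t. \<phi> (\<gamma> t))" by (rule continuous_on_compose2[OF cphi cg]) auto
    define Q where "Q = integral {0..1} (\<lambda>t. (norm (\<phi> (\<gamma> t)))\<^sup>2)"
    have iQ: "((\<lambda>t. (norm (\<phi> (\<gamma> t)))\<^sup>2) has_integral Q) {0..1}"
    proof -
      have cq: "continuous_on UNIV (\<lambda>t. (norm (\<phi> (\<gamma> t)))\<^sup>2)"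
        by (intro continuous_intros cpg)
      then have "(\<lambda>t. (norm (\<phi> (\<gamma> t)))\<^sup>2) integrable_on {0..1}"
        by (intro integrable_continuous_interval continuous_on_subset[OF cq]) auto
      then show ?thesis unfolding Q_def by (rule integrable_integral)
    qed
    have hc: "((\<lambda>t. c) has_integral c) {0..1::real}" for c
      using has_integral_const_real[of c 0 1] by simp
    have iR: "((\<lambda>t. r\<^sup>2 + A - 2 * Re (h (\<gamma> t))) has_integral (r\<^sup>2 + A - 2 * Re (h 0))) {0..1}"
      unfolding \<gamma>_def by (intro has_integral_diff hc has_integral_mult_right mean_Re[OF h r])
    have Qle0: "Q \<le> r\<^sup>2 + A - 2 * Re (h 0)"
    proof (rule has_integral_le[OF iQ iR])
      fix t
      show "(norm (\<phi> (\<gamma> t)))\<^sup>2 \<le> r\<^sup>2 + A - 2 * Re (h (\<gamma> t))"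
        using bd[of "\<gamma> t"] ng[of t] by simp
    qed
    then have Qle: "Q \<le> r\<^sup>2 + B" unfolding B_def by simp
    have cc: "((\<lambda>t. \<phi> (\<gamma> t) / (\<gamma> t) ^ n) has_integral ((deriv ^^ n) \<phi> 0 / fact n)) {0..1}"
      unfolding \<gamma>_def by (rule circle_coeff[OF \<phi> r])
    have ig: "((\<lambda>t. ((norm (\<phi> (\<gamma> t)))\<^sup>2 / (2 * r) + r / 2) / r ^ n) has_integral ((Q / (2 * r) + r / 2) / r ^ n)) {0..1}"
      by (intro has_integral_divide has_integral_add hc iQ)
    have ptb: "norm (\<phi> (\<gamma> t) / \<gamma> t ^ n) \<le> ((norm (\<phi> (\<gamma> t)))\<^sup>2 / (2 * r) + r / 2) / r ^ n" for t
    proof -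
      have "norm (\<phi> (\<gamma> t)) \<le> (norm (\<phi> (\<gamma> t)))\<^sup>2 / (2 * r) + r / 2"
      proof -
        have "0 \<le> (norm (\<phi> (\<gamma> t)) - r)\<^sup>2" by simp
        then show ?thesis using r by (simp add: field_simps power2_eq_square)
      qed
      then show ?thesis
        using r by (simp add: norm_divide norm_power ng divide_right_mono)
    qed
    have "d \<le> (Q / (2 * r) + r / 2) / r ^ n"
      using Henstock_Kurzweil_Integration.integral_norm_bound_integral[OF has_integral_integrable[OF cc] has_integral_integrable[OF ig] ptb]
      unfolding d_def integral_unique[OF cc] integral_unique[OF ig] .
    also have "\<dots> \<le> ((r\<^sup>2 + B) / (2 * r) + r / 2) / r ^ n"
      using Qle r by (intro divide_right_mono add_right_mono) auto
    also have "((r\<^sup>2 + B) / (2 * r) + r / 2) = r + B / (2 * r)"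
      using r by (simp add: field_simps power2_eq_square)
    finally show ?thesis using r by (simp add: field_simps)
  qed
  define r where "r = (2 + 2 * \<bar>B\<bar>) / d + 1"
  have r1: "r \<ge> 1" unfolding r_def using d by simp
  have "d * r ^ 2 \<le> d * r ^ n"
    using r1 n d by (intro mult_left_mono power_increasing) auto
  also have "\<dots> \<le> r + B / (2 * r)" using key r1 by simp
  also have "\<dots> \<le> r + \<bar>B\<bar>"
  proof -
    have "B / (2 * r) \<le> \<bar>B\<bar> / (2 * r)" using r1 by (intro divide_right_mono) auto
    also have "\<dots> \<le> \<bar>B\<bar> / 1" by (rule divide_left_mono) (use r1 in auto)
    finally show ?thesis by simp
  qed
  also have "\<dots> \<le> r * (1 + \<bar>B\<bar>)"
  proof -
    have "\<bar>B\<bar> * 1 \<le> \<bar>B\<bar> * r" using r1 by (intro mult_left_mono) auto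
    then show ?thesis by (simp add: algebra_simps)
  qed
  finally have "d * r ^ 2 \<le> r * (1 + \<bar>B\<bar>)" .
  then have "d * r \<le> 1 + \<bar>B\<bar>" using r1 by (simp add: power2_eq_square mult.assoc)
  moreover have "d * r = 2 + 2 * \<bar>B\<bar> + d" unfolding r_def using d by (simp add: field_simps)
  ultimately show False using d by simp
qed

lemma affine_from_bound:
  fixes \<phi> h :: "complex \<Rightarrow> complex" and A :: real
  assumes \<phi>: "\<phi> holomorphic_on UNIV" and h: "h holomorphic_on UNIV"
    and bd: "\<And>z. (norm (\<phi> z))\<^sup>2 + 2 * Re (h z) \<le> (norm z)\<^sup>2 + A"
  shows "\<phi> z = \<phi> 0 + deriv \<phi> 0 * z"
proof -
  have "((\<lambda>n. (deriv ^^ n) \<phi> 0 / fact n * (z - 0) ^ n) sums \<phi> z)"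
    by (rule holomorphic_power_series[where r="norm z + 1"]) (auto intro: holomorphic_on_subset[OF \<phi>])
  moreover have "((\<lambda>n. (deriv ^^ n) \<phi> 0 / fact n * (z - 0) ^ n) sums (\<Sum>n\<in>{0,1}. (deriv ^^ n) \<phi> 0 / fact n * (z - 0) ^ n))"
    by (rule sums_finite) (use higher_deriv_zero[OF \<phi> h bd] in auto)
  ultimately have "\<phi> z = (\<Sum>n\<in>{0,1}. (deriv ^^ n) \<phi> 0 / fact n * (z - 0) ^ n)"
    using sums_unique2 by blast
  then show ?thesis by simp
qed

lemma norm_exp_cnj_self: "norm (exp (cnj x * x)) = exp ((norm x)\<^sup>2)"
proof -
  have "cnj x * x = of_real ((norm x)\<^sup>2)" using complex_norm_square[of x] by (simp add: mult.commute)
  then show ?thesis by (simp add: norm_exp_eq_Re)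
qed

lemma M_relation:
  fixes a b z :: complex and w :: "complex \<Rightarrow> complex"
  shows "norm (w z) * exp (((norm (a * z + b))\<^sup>2 - (norm z)\<^sup>2) / 2)
       = norm (w z * exp (a * cnj b * z)) * exp ((((norm a)\<^sup>2 - 1) * (norm z)\<^sup>2 + (norm b)\<^sup>2) / 2)"
proof -
  define r where "r = Re (a * cnj b * z)"
  have re: "Re (cnj (a * z) * b) = r" unfolding r_def by (simp add: algebra_simps)
  have sq: "(norm (a * z + b))\<^sup>2 = (norm a)\<^sup>2 * (norm z)\<^sup>2 + 2 * r + (norm b)\<^sup>2"
    using cmod_add_sq[of "a * z" b] re by (simp add: norm_mult power_mult_distrib)
  have n: "norm (w z * exp (a * cnj b * z)) = norm (w z) * exp r"
    unfolding r_def by (simp add: norm_mult norm_exp_eq_Re)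
  have e: "exp (((norm a)\<^sup>2 * (norm z)\<^sup>2 + 2 * r + (norm b)\<^sup>2 - (norm z)\<^sup>2) / 2)
      = exp r * exp ((((norm a)\<^sup>2 - 1) * (norm z)\<^sup>2 + (norm b)\<^sup>2) / 2)"
    unfolding exp_add[symmetric] by (simp add: field_simps)
  show ?thesis unfolding n sq e by (simp add: mult_ac)
qed

lemma exp_sq_split:
  "exp ((norm x)\<^sup>2) = exp ((norm x)\<^sup>2 / 2) * exp ((norm x)\<^sup>2 / 2)"
  "exp (- (norm x)\<^sup>2 / 2) = 1 / exp ((norm x)\<^sup>2 / 2)"
  "exp (((norm y)\<^sup>2 - (norm x)\<^sup>2) / 2) = exp ((norm y)\<^sup>2 / 2) / exp ((norm x)\<^sup>2 / 2)"
  by (simp_all add: exp_add[symmetric] exp_diff[symmetric] exp_minus field_simps)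

lemma upper_bound:
  fixes w \<phi> :: "complex \<Rightarrow> complex" and p C :: real
  assumes p: "p \<ge> 1" and Tm: "\<And>f. f \<in> fock_space p \<Longrightarrow> wcomp w \<phi> f \<in> fock_space p"
    and C: "\<And>f. f \<in> fock_space p \<Longrightarrow> fock_norm p (wcomp w \<phi> f) \<le> C * fock_norm p f"
  shows "norm (w z) * exp (((norm (\<phi> z))\<^sup>2 - (norm z)\<^sup>2) / 2) \<le> PK p * C * fock_norm p (\<lambda>_. 1)"
proof -
  have p0: "p > 0" using p by simp
  define f where "f = (\<lambda>u. exp (cnj (\<phi> z) * u))"
  have fF: "f \<in> fock_space p" unfolding f_def by (rule kernel_in_fock[OF p0])
  define E1 where "E1 = exp ((norm z)\<^sup>2 / 2)"
  define E2 where "E2 = exp ((norm (\<phi> z))\<^sup>2 / 2)"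
  have E1: "E1 > 0" and E2: "E2 > 0" unfolding E1_def E2_def by simp_all
  have nT: "norm (wcomp w \<phi> f z) = norm (w z) * (E2 * E2)"
    unfolding wcomp_def f_def E2_def norm_mult norm_exp_cnj_self exp_sq_split(1) ..
  have "norm (wcomp w \<phi> f z) * exp (- (norm z)\<^sup>2 / 2) \<le> PK p * fock_norm p (wcomp w \<phi> f)"
    by (rule point_est[OF p Tm[OF fF]])
  also have "\<dots> \<le> PK p * (C * fock_norm p f)"
    by (rule mult_left_mono[OF C[OF fF] PK_pos])
  also have "fock_norm p f = E2 * fock_norm p (\<lambda>_. 1)"
    unfolding f_def E2_def kernel_norm[OF p0] by simp
  finally have "norm (w z) * (E2 * E2) * (1 / E1) \<le> PK p * (C * (E2 * fock_norm p (\<lambda>_. 1)))"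
    unfolding nT exp_sq_split E1_def .
  then have "(norm (w z) * E2 / E1) * E2 \<le> (PK p * C * fock_norm p (\<lambda>_. 1)) * E2"
    by (simp add: field_simps)
  then have "norm (w z) * E2 / E1 \<le> PK p * C * fock_norm p (\<lambda>_. 1)"
    using E2 by (simp only: mult_le_cancel_right_pos)
  then show ?thesis unfolding exp_sq_split E1_def E2_def by simp
qed

lemma lower_bound:
  fixes w \<phi> :: "complex \<Rightarrow> complex" and S :: "(complex \<Rightarrow> complex) \<Rightarrow> (complex \<Rightarrow> complex)" and p C' :: real
  assumes p: "p \<ge> 1" and Sm: "\<And>f. f \<in> fock_space p \<Longrightarrow> S f \<in> fock_space p"
    and C': "\<And>f. f \<in> fock_space p \<Longrightarrow> fock_norm p (S f) \<le> C' * fock_norm p f"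
    and TS: "\<And>f. f \<in> fock_space p \<Longrightarrow> wcomp w \<phi> (S f) = f"
  shows "1 \<le> PK p * C' * fock_norm p (\<lambda>_. 1) * (norm (w z) * exp (((norm (\<phi> z))\<^sup>2 - (norm z)\<^sup>2) / 2))"
proof -
  have p0: "p > 0" using p by simp
  define f where "f = (\<lambda>u. exp (cnj z * u))"
  have fF: "f \<in> fock_space p" unfolding f_def by (rule kernel_in_fock[OF p0])
  define h where "h = S f"
  have hF: "h \<in> fock_space p" unfolding h_def by (rule Sm[OF fF])
  have wh: "w z * h (\<phi> z) = exp (cnj z * z)"
    using fun_cong[OF TS[OF fF], of z] unfolding h_def wcomp_def f_def by simp
  define E1 where "E1 = exp ((norm z)\<^sup>2 / 2)"
  define E2 where "E2 = exp ((norm (\<phi> z))\<^sup>2 / 2)"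
  define V where "V = PK p * C' * fock_norm p (\<lambda>_. 1)"
  have E1: "E1 > 0" and E2: "E2 > 0" unfolding E1_def E2_def by simp_all
  have "norm (h (\<phi> z)) * exp (- (norm (\<phi> z))\<^sup>2 / 2) \<le> PK p * fock_norm p h"
    by (rule point_est[OF p hF])
  also have "\<dots> \<le> PK p * (C' * fock_norm p f)"
    unfolding h_def by (rule mult_left_mono[OF C'[OF fF] PK_pos])
  also have "fock_norm p f = E1 * fock_norm p (\<lambda>_. 1)"
    unfolding f_def E1_def kernel_norm[OF p0] by simp
  finally have hb: "norm (h (\<phi> z)) * (1 / E2) \<le> V * E1"
    unfolding exp_sq_split E2_def V_def by (simp add: mult_ac)
  have "E1 * E1 = norm (w z) * norm (h (\<phi> z))"
    using arg_cong[OF wh, of norm] unfolding E1_def norm_mult norm_exp_cnj_self exp_sq_split(1) by simp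
  also have "\<dots> \<le> norm (w z) * (V * E1 * E2)"
  proof (rule mult_left_mono)
    show "norm (h (\<phi> z)) \<le> V * E1 * E2" using hb E2 by (simp add: field_simps)
  qed simp
  finally have "E1 * E1 \<le> norm (w z) * (V * E1 * E2)" .
  then have "1 * E1 \<le> (V * (norm (w z) * E2 / E1)) * E1" using E1 by (simp add: field_simps)
  then have "1 \<le> V * (norm (w z) * E2 / E1)" using E1 by (simp only: mult_le_cancel_right_pos)
  then show ?thesis unfolding exp_sq_split E1_def E2_def V_def by simp
qed

lemma necessity:
  fixes p :: real and w \<phi> :: "complex \<Rightarrow> complex"
  assumes p: "1 \<le> p" and hw: "w holomorphic_on UNIV" and h\<phi>: "\<phi> holomorphic_on UNIV"
    and inv: "fock_invertible_op p (wcomp w \<phi>)"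
  shows "\<exists>a b. norm a = 1 \<and> (\<forall>z. \<phi> z = a * z + b) \<and> w 0 \<noteq> 0 \<and>
                (\<forall>z. w z = w 0 * exp (- cnj b * a * z))"
proof -
  obtain S where Tb: "fock_bounded_op p (wcomp w \<phi>)" and Sb: "fock_bounded_op p S"
    and inv2: "\<And>f. f \<in> fock_space p \<Longrightarrow> S (wcomp w \<phi> f) = f \<and> wcomp w \<phi> (S f) = f"
    using inv unfolding fock_invertible_op_def by blast
  obtain C where C: "\<And>f. f \<in> fock_space p \<Longrightarrow> fock_norm p (wcomp w \<phi> f) \<le> C * fock_norm p f"
    using Tb unfolding fock_bounded_op_def by blast
  have Tm: "\<And>f. f \<in> fock_space p \<Longrightarrow> wcomp w \<phi> f \<in> fock_space p"
    using Tb unfolding fock_bounded_op_def by blast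
  obtain C' where C': "\<And>f. f \<in> fock_space p \<Longrightarrow> fock_norm p (S f) \<le> C' * fock_norm p f"
    using Sb unfolding fock_bounded_op_def by blast
  have Sm: "\<And>f. f \<in> fock_space p \<Longrightarrow> S f \<in> fock_space p"
    using Sb unfolding fock_bounded_op_def by blast
  define U where "U = PK p * C * fock_norm p (\<lambda>_. 1)"
  define V where "V = PK p * C' * fock_norm p (\<lambda>_. 1)"
  define M where "M = (\<lambda>z. norm (w z) * exp (((norm (\<phi> z))\<^sup>2 - (norm z)\<^sup>2) / 2))"
  have up: "M z \<le> U" for z unfolding M_def U_def by (rule upper_bound[OF p Tm C])
  have lo: "1 \<le> V * M z" for z unfolding M_def V_def
    by (rule lower_bound[OF p Sm C']) (use inv2 in auto)
  have wnz: "w z \<noteq> 0" for z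
  proof
    assume "w z = 0"
    then have "M z = 0" unfolding M_def by simp
    with lo[of z] show False by simp
  qed
  have M0: "M z > 0" for z unfolding M_def using wnz[of z] by simp
  have U0: "U > 0" using up[of 0] M0[of 0] by simp
  have V0: "V > 0" using lo[of 0] M0[of 0] by (metis not_le mult_nonpos_nonneg less_le zero_less_one le_less_trans)
  obtain g where hg: "g holomorphic_on UNIV" and eg: "\<And>x. exp (g x) = w x"
    using holomorphic_logarithm_exists[of UNIV w 0] hw wnz by auto
  have bd: "(norm (\<phi> z))\<^sup>2 + 2 * Re (g z) \<le> (norm z)\<^sup>2 + 2 * ln U" for z
  proof -
    have "exp (Re (g z) + ((norm (\<phi> z))\<^sup>2 - (norm z)\<^sup>2) / 2) = M z"
      unfolding M_def eg[symmetric] by (simp add: norm_exp_eq_Re exp_add)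
    then have "exp (Re (g z) + ((norm (\<phi> z))\<^sup>2 - (norm z)\<^sup>2) / 2) \<le> U" using up[of z] by simp
    then have "Re (g z) + ((norm (\<phi> z))\<^sup>2 - (norm z)\<^sup>2) / 2 \<le> ln U"
      using U0 by (metis exp_le_cancel_iff exp_ln)
    then show ?thesis by (simp add: field_simps)
  qed
  define a where "a = deriv \<phi> 0"
  define b where "b = \<phi> 0"
  have \<phi>eq: "\<phi> z = a * z + b" for z
    unfolding a_def b_def using affine_from_bound[OF h\<phi> hg bd, of z] by (metis add.commute)
  define G where "G = (\<lambda>z. w z * exp (a * cnj b * z))"
  have hG: "G holomorphic_on UNIV" unfolding G_def by (intro holomorphic_intros hw)
  have G0: "G 0 = w 0" unfolding G_def by simp
  have Gnz: "G z \<noteq> 0" for z unfolding G_def using wnz by simp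
  define s where "s = (norm a)\<^sup>2 - 1"
  have MG: "M z = norm (G z) * exp ((s * (norm z)\<^sup>2 + (norm b)\<^sup>2) / 2)" for z
    unfolding M_def G_def s_def \<phi>eq by (rule M_relation)
  have Gup: "norm (G z) \<le> (U * exp (- (norm b)\<^sup>2 / 2)) * exp (- (s / 2) * (norm z)\<^sup>2)" for z
  proof -
    have "norm (G z) * exp ((s * (norm z)\<^sup>2 + (norm b)\<^sup>2) / 2) \<le> U" using up[of z] MG[of z] by simp
    then have "norm (G z) \<le> U / exp ((s * (norm z)\<^sup>2 + (norm b)\<^sup>2) / 2)" by (simp add: field_simps)
    also have "\<dots> = (U * exp (- (norm b)\<^sup>2 / 2)) * exp (- (s / 2) * (norm z)\<^sup>2)"
      by (simp add: exp_add[symmetric] exp_diff[symmetric] exp_minus field_simps)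
    finally show ?thesis .
  qed
  have Glo: "norm (1 / G z) \<le> (V * exp ((norm b)\<^sup>2 / 2)) * exp (- (- s / 2) * (norm z)\<^sup>2)" for z
  proof -
    have "1 \<le> V * (norm (G z) * exp ((s * (norm z)\<^sup>2 + (norm b)\<^sup>2) / 2))" using lo[of z] MG[of z] by simp
    then have "1 / norm (G z) \<le> V * exp ((s * (norm z)\<^sup>2 + (norm b)\<^sup>2) / 2)"
      using Gnz[of z] by (simp add: field_simps)
    also have "\<dots> = (V * exp ((norm b)\<^sup>2 / 2)) * exp (- (- s / 2) * (norm z)\<^sup>2)"
      by (simp add: exp_add[symmetric] field_simps)
    finally show ?thesis by (simp add: norm_divide)
  qed
  have s0: "s = 0"
  proof (rule ccontr)
    assume "s \<noteq> 0"
    then consider "s > 0" | "s < 0" by linarith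
    then show False
    proof cases
      case 1
      have "(G \<longlongrightarrow> 0) at_infinity"
        by (rule Lim_null_comparison[OF always_eventually gauss_decay[of "s / 2" "U * exp (- (norm b)\<^sup>2 / 2)"]])
           (use Gup 1 in auto)
      then have "G 0 = 0" by (rule Liouville_weak_0[OF hG])
      then show False using Gnz by blast
    next
      case 2
      have hG': "(\<lambda>z. 1 / G z) holomorphic_on UNIV" using hG Gnz by (intro holomorphic_intros) auto
      have "((\<lambda>z. 1 / G z) \<longlongrightarrow> 0) at_infinity"
        by (rule Lim_null_comparison[OF always_eventually gauss_decay[of "- s / 2" "V * exp ((norm b)\<^sup>2 / 2)"]])
           (use Glo 2 in auto)
      then have "1 / G 0 = 0" by (rule Liouville_weak_0[OF hG'])
      then show False using Gnz by simp
    qed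
  qed
  have a1: "norm a = 1" using s0 unfolding s_def by (metis add.commute add.right_neutral diff_add_cancel norm_ge_zero power2_eq_1_iff neg_le_0_iff_le zero_neq_neg_one order_antisym_conv zero_le_one)
  have "bounded (range G)"
    unfolding bounded_iff using Gup s0 by auto
  then have "G constant_on UNIV" by (rule Liouville_theorem[OF hG])
  then have Gc: "G z = w 0" for z using G0 unfolding constant_on_def by (metis UNIV_I)
  have weq: "w z = w 0 * exp (- cnj b * a * z)" for z
  proof -
    have "w z = G z * exp (- (a * cnj b * z))" unfolding G_def by (simp add: exp_minus)
    then show ?thesis using Gc[of z] by (simp add: mult_ac)
  qed
  show ?thesis using a1 \<phi>eq wnz weq by blast
qed

theorem proposition1p3:
  fixes \<nu> :: real and w \<phi> :: "complex \<Rightarrow> complex"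
  assumes "1 \<le> \<nu>"
    and "w holomorphic_on UNIV" and "\<phi> holomorphic_on UNIV"
  shows "fock_invertible_op \<nu> (wcomp w \<phi>) \<longleftrightarrow>
         (\<exists>a b. norm a = 1 \<and> (\<forall>z. \<phi> z = a * z + b) \<and> w 0 \<noteq> 0 \<and>
                (\<forall>z. w z = w 0 * exp (- cnj b * a * z)))"
proof
  assume "fock_invertible_op \<nu> (wcomp w \<phi>)"
  then show "\<exists>a b. norm a = 1 \<and> (\<forall>z. \<phi> z = a * z + b) \<and> w 0 \<noteq> 0 \<and>
                (\<forall>z. w z = w 0 * exp (- cnj b * a * z))"
    using necessity[OF assms] by blast
next
  assume "\<exists>a b. norm a = 1 \<and> (\<forall>z. \<phi> z = a * z + b) \<and> w 0 \<noteq> 0 \<and>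
                (\<forall>z. w z = w 0 * exp (- cnj b * a * z))"
  then show "fock_invertible_op \<nu> (wcomp w \<phi>)"
    using sufficiency[OF assms(1)] by blast
qed

end
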